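(* Consider the binary asymmetric channel with a single error and one-time feedback, with $n=n_1+n_2$. Suppose that for each $w\in\{0,1,\ldots,n_1\}$ there is a nonadaptive code of length $n_2$ correcting one asymmetric error with $M_w$ codewords and $F_w$ free points, and assign this code to every input sequence $u\in\{0,1\}^{n_1}$ of Hamming weight $w$ (so that $M(u)=M_w$ and $F(u)=F_w$ depend only on the weight of $u$). If $$(n_1-w)M_{w+1}\le F_w\quad\text{for all } w\in[0,n_1-1],$$ then a single-error-correcting strategy of length $n$ with one-time feedback after the first $n_1$ symbols transmits $$M=\sum_{w=0}^{n_1}\binom{n_1}{w}M_w$$ messages.
   Context: Binary asymmetric channel: alphabet $\{0,1\}$; a transmitted 1 may be received as 0, while a transmitted 0 is always received correctly; "a single error" means at most one such error in the whole transmission. A strategy with one-time feedback after $n_1$ symbols for messages $m\in[M]$: the first $n_1$ transmitted symbols depend only on $m$; then the encoder learns the $n_1$ received symbols (error-free, instantaneously), and the remaining $n_2$ symbols depend on $m$ and those received symbols; it transmits $M$ messages if the sets of output sequences reachable from distinct messages with at most one error are pairwise disjoint. A nonadaptive code of length $n_2$ correcting one asymmetric error is a set of codewords in $\{0,1\}^{n_2}$ whose clouds (sets of words obtainable from the codeword by at most one $1\to0$ change) are pairwise disjoint; its free points are the words of $\{0,1\}^{n_2}$ in no cloud. *)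

theory Defs
  imports Main
begin

text \<open>Binary words are lists of booleans (True = 1, False = 0).
  The cloud of a word x: all words obtainable from x by at most one change 1 to 0.\<close>
definition cloud :: "bool list \<Rightarrow> bool list set" where
  "cloud x = insert x {x[i := False] | i. i < length x \<and> x ! i}"

definition asym_code :: "nat \<Rightarrow> bool list set \<Rightarrow> bool" where
  "asym_code n C \<longleftrightarrow> C \<subseteq> {x. length x = n} \<and>
     (\<forall>c\<in>C. \<forall>d\<in>C. c \<noteq> d \<longrightarrow> cloud c \<inter> cloud d = {})"

definition free_points :: "nat \<Rightarrow> bool list set \<Rightarrow> bool list set" where
  "free_points n C = {x. length x = n} - (\<Union>c\<in>C. cloud c)"

text \<open>Output sequences reachable from message m with at most one error, for a strategy
  with one-time feedback after n1 symbols: f1 m is the first block, f2 m y1 the second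
  block given the received first block y1.  If an error occurred in the first block,
  the second block is received correctly; otherwise the second block may suffer one error.\<close>
definition outputs ::
  "(nat \<Rightarrow> bool list) \<Rightarrow> (nat \<Rightarrow> bool list \<Rightarrow> bool list) \<Rightarrow> nat \<Rightarrow> bool list set" where
  "outputs f1 f2 m = {y1 @ y2 | y1 y2. y1 \<in> cloud (f1 m) \<and>
      (if y1 = f1 m then y2 \<in> cloud (f2 m y1) else y2 = f2 m y1)}"

definition transmits ::
  "nat \<Rightarrow> nat \<Rightarrow> nat \<Rightarrow> (nat \<Rightarrow> bool list) \<Rightarrow> (nat \<Rightarrow> bool list \<Rightarrow> bool list) \<Rightarrow> bool" where
  "transmits n1 n2 M f1 f2 \<longleftrightarrow>
     (\<forall>m<M. length (f1 m) = n1 \<and> (\<forall>y. length y = n1 \<longrightarrow> length (f2 m y) = n2)) \<and>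
     (\<forall>m<M. \<forall>m'<M. m \<noteq> m' \<longrightarrow> outputs f1 f2 m \<inter> outputs f1 f2 m' = {})"

end

theory Submission
  imports Defs
begin

definition wt :: "bool list \<Rightarrow> nat" where
  "wt u = card {i. i < length u \<and> u ! i}"

lemma cloud_length: "y \<in> cloud x \<Longrightarrow> length y = length x"
  unfolding cloud_def by auto

lemma wt_le: "wt u \<le> length u"
proof -
  have "card {i. i < length u \<and> u ! i} \<le> card {..<length u}"
    by (rule card_mono) auto
  then show ?thesis by (simp add: wt_def)
qed

lemma wt_flip:
  assumes "i < length u" "u ! i"
  shows "wt (u[i := False]) = wt u - 1" "wt u \<ge> 1"
proof -
  have e: "{j. j < length (u[i:=False]) \<and> u[i:=False] ! j} = {j. j < length u \<and> u ! j} - {i}"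
    using assms by (auto simp: nth_list_update)
  have f: "finite {j. j < length u \<and> u ! j}" by simp
  have m: "i \<in> {j. j < length u \<and> u ! j}" using assms by simp
  show "wt (u[i := False]) = wt u - 1" unfolding wt_def e using card_Diff_singleton[OF m] by simp
  have "card {j. j < length u \<and> u ! j} > 0" using f m card_gt_0_iff by blast
  then show "wt u \<ge> 1" unfolding wt_def by simp
qed

lemma card_zeros: "card {i. i < length y \<and> \<not> y ! i} = length y - wt y"
proof -
  have "{i. i < length y \<and> \<not> y ! i} = {..<length y} - {i. i < length y \<and> y ! i}" by auto
  moreover have "card ({..<length y} - {i. i < length y \<and> y ! i}) = card {..<length y} - card {i. i < length y \<and> y ! i}"
    by (rule card_Diff_subset) auto
  ultimately show ?thesis unfolding wt_def by simp
qed

lemma count_words: "card {u. length u = n \<and> wt u = w} = n choose w"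
proof -
  let ?h = "\<lambda>u::bool list. {i. i < n \<and> u ! i}"
  have bij: "bij_betw ?h {u. length u = n \<and> wt u = w} {A. A \<subseteq> {..<n} \<and> card A = w}"
  proof (rule bij_betw_imageI)
    show "inj_on ?h {u. length u = n \<and> wt u = w}"
    proof (rule inj_onI)
      fix u v assume u: "u \<in> {u. length u = n \<and> wt u = w}" and v: "v \<in> {u. length u = n \<and> wt u = w}"
        and eq: "?h u = ?h v"
      show "u = v"
      proof (rule nth_equalityI)
        show "length u = length v" using u v by simp
        fix i assume "i < length u"
        then show "u ! i = v ! i" using eq u by blast
      qed
    qed
    show "?h ` {u. length u = n \<and> wt u = w} = {A. A \<subseteq> {..<n} \<and> card A = w}"
    proof
      show "?h ` {u. length u = n \<and> wt u = w} \<subseteq> {A. A \<subseteq> {..<n} \<and> card A = w}"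
        by (auto simp: wt_def)
      show "{A. A \<subseteq> {..<n} \<and> card A = w} \<subseteq> ?h ` {u. length u = n \<and> wt u = w}"
      proof
        fix A assume A: "A \<in> {A. A \<subseteq> {..<n} \<and> card A = w}"
        let ?u = "map (\<lambda>i. i \<in> A) [0..<n]"
        have "?h ?u = A" using A by auto
        moreover have "wt ?u = w" unfolding wt_def using \<open>?h ?u = A\<close> A by simp
        moreover have "length ?u = n" by simp
        ultimately show "A \<in> ?h ` {u. length u = n \<and> wt u = w}"
          by (intro image_eqI[of _ _ ?u]) auto
      qed
    qed
  qed
  have "card {A. A \<subseteq> {..<n} \<and> card A = w} = n choose w"
    using n_subsets[of "{..<n}" w] by simp
  then show ?thesis using bij_betw_same_card[OF bij] by simp
qed

theorem corollary2:
  fixes n1 n2 :: nat and C :: "nat \<Rightarrow> bool list set" and M F :: "nat \<Rightarrow> nat"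
  assumes codes: "\<forall>w\<le>n1. asym_code n2 (C w)"
    and cardM: "\<forall>w\<le>n1. card (C w) = M w"
    and cardF: "\<forall>w\<le>n1. card (free_points n2 (C w)) = F w"
    and cond: "\<forall>w<n1. (n1 - w) * M (w + 1) \<le> F w"
  shows "\<exists>f1 f2. transmits n1 n2 (\<Sum>w\<le>n1. (n1 choose w) * M w) f1 f2"
proof -
  have finC: "finite (C w)" if "w \<le> n1" for w
  proof -
    have "C w \<subseteq> {x::bool list. length x = n2}" using codes that unfolding asym_code_def by blast
    then show ?thesis using finite_lists_length_eq[of "UNIV::bool set" n2] finite_subset by auto
  qed
  define S where "S = {(u, c). length u = n1 \<and> c \<in> C (wt u)}"
  have S_eq: "S = (\<Union>w\<in>{..n1}. {u. length u = n1 \<and> wt u = w} \<times> C w)"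
    unfolding S_def using wt_le by fastforce
  have cardS: "card S = (\<Sum>w\<le>n1. (n1 choose w) * M w)"
  proof -
    have "card S = (\<Sum>w\<in>{..n1}. card ({u. length u = n1 \<and> wt u = w} \<times> C w))"
      unfolding S_eq
    proof (rule card_UN_disjoint)
      show "finite {..n1}" by simp
      show "\<forall>i\<in>{..n1}. finite ({u. length u = n1 \<and> wt u = i} \<times> C i)"
        using finC finite_lists_length_eq[of "UNIV::bool set" n1] by auto
      show "\<forall>i\<in>{..n1}. \<forall>j\<in>{..n1}. i \<noteq> j \<longrightarrow>
        ({u. length u = n1 \<and> wt u = i} \<times> C i) \<inter> ({u. length u = n1 \<and> wt u = j} \<times> C j) = {}"
        by auto
    qed
    also have "\<dots> = (\<Sum>w\<le>n1. (n1 choose w) * M w)"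
      by (rule sum.cong) (auto simp: card_cartesian_product count_words cardM)
    finally show ?thesis .
  qed
  have finS: "finite S"
    unfolding S_eq using finC finite_lists_length_eq[of "UNIV::bool set" n1] by auto
  define N where "N = (\<Sum>w\<le>n1. (n1 choose w) * M w)"
  obtain e where e_inj: "inj_on e {..<N}" and e_S: "e ` {..<N} \<subseteq> S"
    using card_le_inj[of "{..<N}" S] finS cardS unfolding N_def by auto
  define P where "P y = {p \<in> S. y \<in> cloud (fst p) \<and> y \<noteq> fst p}" for y
  define FP where "FP y = free_points n2 (C (wt y))" for y
  have gex: "\<exists>g. inj_on g (P y) \<and> g ` P y \<subseteq> FP y" for y
  proof (cases "P y = {}")
    case True then show ?thesis by auto
  next
    case False
    then obtain u c where uc: "(u, c) \<in> P y" by auto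
    then have u: "length u = n1" "y \<in> cloud u" "y \<noteq> u" unfolding P_def S_def by auto
    then obtain i where i: "i < length u" "u ! i" "y = u[i := False]" unfolding cloud_def by auto
    have wy: "wt y = wt u - 1" "wt u \<ge> 1" using wt_flip[OF i(1,2)] i(3) by auto
    have wyl: "wt y < n1" using wy wt_le[of u] u(1) by linarith
    have ly: "length y = n1" using i u by simp
    have sub: "P y \<subseteq> (\<lambda>(j, c). (y[j := True], c)) ` ({j. j < length y \<and> \<not> y ! j} \<times> C (wt y + 1))"
    proof
      fix p assume p: "p \<in> P y"
      obtain v d where vd: "p = (v, d)" by (cases p)
      have v: "length v = n1" "y \<in> cloud v" "y \<noteq> v" "d \<in> C (wt v)" using p vd unfolding P_def S_def by auto
      then obtain j where j: "j < length v" "v ! j" "y = v[j := False]" unfolding cloud_def by auto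
      have "wt y = wt v - 1" "wt v \<ge> 1" using wt_flip[OF j(1,2)] j(3) by auto
      then have "wt v = wt y + 1" by simp
      moreover have "v = y[j := True]" using j by (metis list_update_id list_update_overwrite)
      moreover have "j < length y" "\<not> y ! j" using j by auto
      ultimately show "p \<in> (\<lambda>(j, c). (y[j := True], c)) ` ({j. j < length y \<and> \<not> y ! j} \<times> C (wt y + 1))"
        using vd v(4) by force
    qed
    have fin1: "finite ({j. j < length y \<and> \<not> y ! j} \<times> C (wt y + 1))"
      using finC wyl by auto
    have "card (P y) \<le> card ((\<lambda>(j, c). (y[j := True], c)) ` ({j. j < length y \<and> \<not> y ! j} \<times> C (wt y + 1)))"
      by (rule card_mono[OF finite_imageI[OF fin1] sub])
    also have "\<dots> \<le> card ({j. j < length y \<and> \<not> y ! j} \<times> C (wt y + 1))"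
      by (rule card_image_le[OF fin1])
    also have "\<dots> = (n1 - wt y) * M (wt y + 1)"
      using card_zeros[of y] ly cardM wyl by (simp add: card_cartesian_product)
    also have "\<dots> \<le> F (wt y)" using cond wyl by simp
    also have "\<dots> = card (FP y)" using cardF wyl unfolding FP_def by simp
    finally have "card (P y) \<le> card (FP y)" .
    moreover have "finite (FP y)" unfolding FP_def free_points_def
      using finite_lists_length_eq[of "UNIV::bool set" n2] by auto
    moreover have "finite (P y)" using finS finite_subset[of "P y" S] unfolding P_def by blast
    ultimately show ?thesis using card_le_inj[of "P y" "FP y"] by blast
  qed
  obtain g where g: "\<And>y. inj_on (g y) (P y) \<and> g y ` P y \<subseteq> FP y"
    using gex by metis
  define f1 where "f1 m = fst (e m)" for m
  define f2 where "f2 m y = (if y = fst (e m) then snd (e m) else if y \<in> cloud (fst (e m)) then g y (e m) else replicate n2 False)" for m y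
  have eS: "fst (e m) \<in> {u. length u = n1} \<and> snd (e m) \<in> C (wt (fst (e m)))" if "m < N" for m
    using e_S that unfolding S_def by (auto split: prod.splits)
  have wtle: "wt (fst (e m)) \<le> n1" if "m < N" for m using eS[OF that] wt_le by fastforce
  have codelen: "length c = n2" if "c \<in> C w" "w \<le> n1" for c w
    using codes that unfolding asym_code_def by blast
  have inP: "e m \<in> P y" if "m < N" "y \<in> cloud (fst (e m))" "y \<noteq> fst (e m)" for m y
    using that e_S unfolding P_def by auto
  have gFP: "g y (e m) \<in> FP y" if "m < N" "y \<in> cloud (fst (e m))" "y \<noteq> fst (e m)" for m y
    using g inP[OF that] by blast
  have FPlen: "x \<in> FP y \<Longrightarrow> length x = n2" for x y unfolding FP_def free_points_def by auto
  have FPnot: "x \<in> FP y \<Longrightarrow> c \<in> C (wt y) \<Longrightarrow> x \<notin> cloud c" for x y c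
    unfolding FP_def free_points_def by auto
  have lens: "\<forall>m<N. length (f1 m) = n1 \<and> (\<forall>y. length y = n1 \<longrightarrow> length (f2 m y) = n2)"
  proof (intro allI impI conjI)
    fix m y assume m: "m < N"
    show "length (f1 m) = n1" using eS[OF m] unfolding f1_def by simp
    show "length (f2 m y) = n2"
      using codelen[OF conjunct2[OF eS[OF m]] wtle[OF m]] gFP[OF m] FPlen unfolding f2_def by auto
  qed
  have disj: "outputs f1 f2 m \<inter> outputs f1 f2 m' = {}" if m: "m < N" and m': "m' < N" and mm: "m \<noteq> m'" for m m'
  proof (rule ccontr)
    assume "outputs f1 f2 m \<inter> outputs f1 f2 m' \<noteq> {}"
    then obtain y1 y2 y1' y2' where
      z: "y1 @ y2 = y1' @ y2'" and
      c1: "y1 \<in> cloud (f1 m)" "if y1 = f1 m then y2 \<in> cloud (f2 m y1) else y2 = f2 m y1" and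
      c2: "y1' \<in> cloud (f1 m')" "if y1' = f1 m' then y2' \<in> cloud (f2 m' y1') else y2' = f2 m' y1'"
      unfolding outputs_def by blast
    obtain u c where uc: "e m = (u, c)" by (cases "e m")
    obtain u' c' where uc': "e m' = (u', c')" by (cases "e m'")
    have ne: "(u, c) \<noteq> (u', c')" using e_inj m m' mm uc uc' unfolding inj_on_def by auto
    have lu: "length u = n1" "c \<in> C (wt u)" using eS[OF m] uc by auto
    have lu': "length u' = n1" "c' \<in> C (wt u')" using eS[OF m'] uc' by auto
    have "length y1 = n1" "length y1' = n1" using c1(1) c2(1) cloud_length lu lu' uc uc' unfolding f1_def by auto
    then have yy: "y1' = y1" "y2' = y2" using z by auto
    have f1u: "f1 m = u" "f1 m' = u'" unfolding f1_def using uc uc' by auto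
    show False
    proof (cases "y1 = u")
      case True
      note T = True
      have y2c: "y2 \<in> cloud c" using c1 T f1u uc unfolding f2_def by simp
      show ?thesis
      proof (cases "y1 = u'")
        case True
        have "y2 \<in> cloud c'" using c2 yy True f1u uc' unfolding f2_def by simp
        moreover have "c \<noteq> c'" using ne T True by simp
        moreover have "asym_code n2 (C (wt u))" using codes wtle[OF m] uc by auto
        ultimately show False using y2c lu lu' T True unfolding asym_code_def by blast
      next
        case False
        have "y2 = g y1 (e m')" using c2 yy False f1u uc' unfolding f2_def by simp
        moreover have "g y1 (e m') \<in> FP y1" using gFP[OF m'] c2(1) False f1u uc' yy by simp
        ultimately show False using FPnot y2c lu T by blast
      qed
    next
      case False
      note F = False
      have y2g: "y2 = g y1 (e m)" using c1 F f1u uc unfolding f2_def by simp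
      have gm: "g y1 (e m) \<in> FP y1" using gFP[OF m] c1(1) F f1u uc by simp
      show ?thesis
      proof (cases "y1 = u'")
        case True
        have y2c: "y2 \<in> cloud c'" using c2 yy True f1u uc' unfolding f2_def by simp
        show False using FPnot y2c lu' True y2g gm by blast
      next
        case False
        have "y2 = g y1 (e m')" using c2 yy False f1u uc' unfolding f2_def by simp
        moreover have "e m \<in> P y1" using inP[OF m] c1(1) F f1u uc by simp
        moreover have "e m' \<in> P y1" using inP[OF m'] c2(1) False f1u uc' yy by simp
        ultimately have "e m = e m'" using g y2g unfolding inj_on_def by metis
        then show False using ne uc uc' by simp
      qed
    qed
  qed
  have "transmits n1 n2 N f1 f2" unfolding transmits_def using lens disj by blast
  then show ?thesis unfolding N_def by blast
qed

end
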